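(* For every integer $d\ge3$, the number of binomials of degree $d$ in the set $\mathcal{G}'=\{g^{\mathbf{s}}:\mathbf{s}\in\{1,2\}^n,n\in\mathbb{N}_0\}$ equals the Fibonacci number $F_{d-3}$.
   Context: Fibonacci numbers: $F_0=0$, $F_1=1$, $F_{n+2}=F_{n+1}+F_n$. The binomials live in $R=\mathbb{K}[x_{i,i+1},x_{i,i+2}: i\in\mathbb{N}]$ ($\mathbb{K}$ a field). Let $E=\{[i,i+1],[i,i+2]:i\in\mathbb{N}\}$, totally ordered by $[i,j]\le[k,l]$ iff $i\le k$ and $j\le l$. For a binomial $g=\prod x_{i,j}^{u_{i,j}}-\prod x_{i,j}^{v_{i,j}}$, $w_g([i,j])=u_{i,j}-v_{i,j}$; a finitely supported $w:E\to\mathbb{Z}$ has associated binomial $\prod x_{i,j}^{\max(w([i,j]),0)}-\prod x_{i,j}^{\max(-w([i,j]),0)}$. A vertex $n$ is adjacent to $g$ if $n\in\{i,j\}$ for some $[i,j]$ with $w_g([i,j])\ne0$. Let $g^{\emptyset}=x_{1,2}x_{3,5}^2x_{6,7}-x_{1,3}x_{2,3}x_{5,6}x_{5,7}$; recursively, for $\mathbf{s}=(s_1,\dots,s_n)$ with $w=w_{g^{\mathbf{s}}}$ and $k$ the largest vertex adjacent to $g^{\mathbf{s}}$, $g^{(s_1,\dots,s_n,1)}$ is the binomial of the weight $[i,j]\mapsto w([i,j])$ if $[i,j]\le[k-4,k-2]$, $2w([i,j])$ if $[i,j]=[k-2,k]$, $-w([i-2,j-2])$ if $[i,j]\ge[k,k+1]$,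 $0$ otherwise; and $g^{(s_1,\dots,s_n,2)}$ is the binomial of the weight $[i,j]\mapsto w([i,j])$ if $[i,j]\le[k-4,k-2]$, $2w([i,j])$ if $[i,j]=[k-2,k-1]$, $-2w([k-2,k-1])$ if $[i,j]=[k-1,k+1]$, $w([i-3,j-3])$ if $[i,j]\ge[k+1,k+2]$, $0$ otherwise. *)

theory Defs
  imports "HOL-Number_Theory.Fib"
begin

text \<open>Weights are integer functions on pairs (zero outside E).
  A monomial is an exponent function on pairs; a binomial is represented by
  its pair of monomials (u, v), standing for u - v.\<close>

type_synonym edge = "nat \<times> nat"
type_synonym weight = "edge \<Rightarrow> int"
type_synonym monomial = "edge \<Rightarrow> nat"
type_synonym binomial = "monomial \<times> monomial"

definition Edges :: "edge set" where
  "Edges = {(i, i + 1) | i. True} \<union> {(i, i + 2) | i. True}"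

definition edge_le :: "edge \<Rightarrow> edge \<Rightarrow> bool" where
  "edge_le e f \<longleftrightarrow> fst e \<le> fst f \<and> snd e \<le> snd f"

definition weight_of :: "binomial \<Rightarrow> weight" where
  "weight_of g = (\<lambda>e. int (fst g e) - int (snd g e))"

definition binom_of :: "weight \<Rightarrow> binomial" where
  "binom_of w = ((\<lambda>e. nat (max (w e) 0)), (\<lambda>e. nat (max (- w e) 0)))"

definition mono_deg :: "monomial \<Rightarrow> nat" where
  "mono_deg m = (\<Sum>e\<in>{e. m e \<noteq> 0}. m e)"

definition binom_deg :: "binomial \<Rightarrow> nat" where
  "binom_deg g = max (mono_deg (fst g)) (mono_deg (snd g))"

definition max_adj :: "binomial \<Rightarrow> nat" where
  "max_adj g = Max {n. \<exists>i j. (i, j) \<in> Edges \<and> weight_of g (i, j) \<noteq> 0 \<and> (n = i \<or> n = j)}"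

definition g_empty :: binomial where
  "g_empty =
     ((\<lambda>e. if e = (1,2) then 1 else if e = (3,5) then 2 else if e = (6,7) then 1 else 0),
      (\<lambda>e. if e = (1,3) \<or> e = (2,3) \<or> e = (5,6) \<or> e = (5,7) then 1 else 0))"

definition step1 :: "binomial \<Rightarrow> binomial" where
  "step1 g = (let w = weight_of g; k = max_adj g in binom_of (\<lambda>(i, j).
      if (i, j) \<notin> Edges then 0
      else if edge_le (i, j) (k - 4, k - 2) then w (i, j)
      else if (i, j) = (k - 2, k) then 2 * w (i, j)
      else if edge_le (k, k + 1) (i, j) then - w (i - 2, j - 2)
      else 0))"

definition step2 :: "binomial \<Rightarrow> binomial" where
  "step2 g = (let w = weight_of g; k = max_adj g in binom_of (\<lambda>(i, j).
      if (i, j) \<notin> Edges then 0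
      else if edge_le (i, j) (k - 4, k - 2) then w (i, j)
      else if (i, j) = (k - 2, k - 1) then 2 * w (i, j)
      else if (i, j) = (k - 1, k + 1) then - 2 * w (k - 2, k - 1)
      else if edge_le (k + 1, k + 2) (i, j) then w (i - 3, j - 3)
      else 0))"

definition step :: "nat \<Rightarrow> binomial \<Rightarrow> binomial" where
  "step a g = (if a = 1 then step1 g else step2 g)"

definition g_seq :: "nat list \<Rightarrow> binomial" where
  "g_seq s = foldl (\<lambda>g a. step a g) g_empty s"

definition G' :: "binomial set" where
  "G' = {g_seq s | s. set s \<subseteq> {1, 2}}"

end

theory Submission imports Defs begin

definition PP :: "weight \<Rightarrow> nat" where "PP w = mono_deg (\<lambda>e. nat (max (w e) 0))"

lemma mono_deg_eq: assumes "finite S" "{e. f e \<noteq> 0} \<subseteq> S" shows "mono_deg f = sum f S"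
  unfolding mono_deg_def using assms by (intro sum.mono_neutral_left) auto

lemma PP_upd0: assumes "finite {e. w e \<noteq> 0}"
  shows "int (PP (w(x:=y))) = int (PP w) + max y 0 - max (w x) 0"
proof -
  let ?S = "insert x {e. w e \<noteq> 0}"
  have f: "finite ?S" using assms by simp
  have 1: "PP (w(x:=y)) = sum (\<lambda>e. nat (max ((w(x:=y)) e) 0)) ?S" unfolding PP_def
    by (rule mono_deg_eq[OF f]) auto
  have 2: "PP w = sum (\<lambda>e. nat (max (w e) 0)) ?S" unfolding PP_def by (rule mono_deg_eq[OF f]) auto
  have 3: "sum (\<lambda>e. nat (max ((w(x:=y)) e) 0)) ?S = nat (max y 0) + sum (\<lambda>e. nat (max (w e) 0)) (?S - {x})"
    apply (subst sum.remove[OF f insertI1])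
    by simp
  have 4: "sum (\<lambda>e. nat (max (w e) 0)) ?S = nat (max (w x) 0) + sum (\<lambda>e. nat (max (w e) 0)) (?S - {x})"
    by (subst sum.remove[OF f insertI1]) simp
  show ?thesis using 1 2 3 4 by simp
qed

definition fsupp :: "weight \<Rightarrow> bool" where "fsupp w \<longleftrightarrow> finite {e. w e \<noteq> 0}"

lemma fin_upd[simp]: "fsupp w \<Longrightarrow> fsupp (w(x:=y))"
  unfolding fsupp_def by (rule finite_subset[of _ "insert x {e. w e \<noteq> 0}"]) auto

lemma PP_upd[simp]: "fsupp w \<Longrightarrow> int (PP (w(x:=y))) = int (PP w) + max y 0 - max (w x) 0"
  unfolding fsupp_def by (rule PP_upd0)

definition negw :: "weight \<Rightarrow> weight" where "negw w = (\<lambda>e. - w e)"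

lemma neg_upd[simp]: "negw (w(x:=y)) = (negw w)(x := - y)"
  unfolding negw_def by auto

lemma negw_app[simp]: "negw w x = - w x" unfolding negw_def by simp

lemma fin_neg[simp]: "fsupp (negw w) = fsupp w" unfolding fsupp_def negw_def by simp

lemma weight_binom[simp]: "weight_of (binom_of w) = w"
  unfolding weight_of_def binom_of_def by (auto simp: max_def)

lemma Edges_iff: "(i, j) \<in> Edges \<longleftrightarrow> (j = Suc i \<or> j = i + 2)"
  unfolding Edges_def by auto

definition InvW :: "weight \<Rightarrow> nat \<Rightarrow> int \<Rightarrow> nat \<Rightarrow> bool" where
"InvW w m sg D \<longleftrightarrow> (sg = 1 \<or> sg = -1) \<and> (\<forall>e. e \<notin> Edges \<longrightarrow> w e = 0) \<and>
   (\<forall>i j. m + 7 < j \<longrightarrow> w (i, j) = 0) \<and> w (m+4, m+5) = 0 \<and> w (m+4, m+6) = 0 \<and>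
   w (m+5, m+6) = - sg \<and> w (m+5, m+7) = - sg \<and> w (m+6, m+7) = sg \<and>
   PP w = D \<and> PP (\<lambda>e. - w e) = D"

definition Inv :: "binomial \<Rightarrow> nat \<Rightarrow> int \<Rightarrow> nat \<Rightarrow> bool" where
"Inv g m sg D \<longleftrightarrow> g = binom_of (weight_of g) \<and> InvW (weight_of g) m sg D"

lemma InvW_fin: assumes "InvW w m sg D" shows "finite {e. w e \<noteq> 0}"
proof (rule finite_subset[of _ "{..m+7} \<times> {..m+7}"])
  show "{e. w e \<noteq> 0} \<subseteq> {..m+7} \<times> {..m+7}"
  proof
    fix e assume "e \<in> {e. w e \<noteq> 0}"
    then obtain i j where e: "e = (i,j)" "w (i,j) \<noteq> 0" by (cases e) auto
    then have "(i,j) \<in> Edges" "\<not> m + 7 < j" using assms unfolding InvW_def by blast+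
    then show "e \<in> {..m+7} \<times> {..m+7}" using e by (auto simp: Edges_iff)
  qed
qed auto

lemma Inv_max_adj: assumes "Inv g m sg D" shows "max_adj g = m + 7"
proof -
  let ?V = "{n. \<exists>i j. (i, j) \<in> Edges \<and> weight_of g (i, j) \<noteq> 0 \<and> (n = i \<or> n = j)}"
  have W: "InvW (weight_of g) m sg D" using assms Inv_def by auto
  have sub: "?V \<subseteq> {..m+7}"
  proof
    fix n assume "n \<in> ?V"
    then obtain i j where "(i, j) \<in> Edges" "weight_of g (i, j) \<noteq> 0" "n = i \<or> n = j" by blast
    moreover have "\<not> m + 7 < j" using W calculation unfolding InvW_def by blast
    ultimately show "n \<in> {..m+7}" by (auto simp: Edges_iff)
  qed
  have mem: "m + 7 \<in> ?V"
  proof -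
    have "(m+6, m+7) \<in> Edges" by (simp add: Edges_iff)
    moreover have "weight_of g (m+6, m+7) \<noteq> 0" using W unfolding InvW_def by auto
    ultimately show ?thesis by blast
  qed
  show ?thesis unfolding max_adj_def
    by (rule Max_eqI) (use sub mem finite_subset in auto)
qed


lemma step1_w: assumes W: "InvW w m sg D"
  shows "(\<lambda>(i, j).
      if (i, j) \<notin> Edges then 0
      else if edge_le (i, j) (m + 7 - 4, m + 7 - 2) then w (i, j)
      else if (i, j) = (m + 7 - 2, m + 7) then 2 * w (i, j)
      else if edge_le (m + 7, m + 7 + 1) (i, j) then - w (i - 2, j - 2)
      else 0) = w((m+5,m+6):=0, (m+5,m+7):= -2*sg, (m+6,m+7):=0, (m+7,m+8):=sg, (m+7,m+9):=sg, (m+8,m+9):= -sg)"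
proof -
  have z: "\<And>e. e \<notin> Edges \<Longrightarrow> w e = 0" and zj: "\<And>i j. m + 7 < j \<Longrightarrow> w (i, j) = 0"
    and v: "w (m+4, m+5) = 0" "w (m+4, m+6) = 0" "w (m+5, m+6) = - sg" "w (m+5, m+7) = - sg" "w (m+6, m+7) = sg"
    using W unfolding InvW_def by auto
  show ?thesis
  proof (rule ext, clarify)
    fix i j
    show "(if (i, j) \<notin> Edges then 0
      else if edge_le (i, j) (m + 7 - 4, m + 7 - 2) then w (i, j)
      else if (i, j) = (m + 7 - 2, m + 7) then 2 * w (i, j)
      else if edge_le (m + 7, m + 7 + 1) (i, j) then - w (i - 2, j - 2)
      else 0) = (w((m+5,m+6):=0, (m+5,m+7):= -2*sg, (m+6,m+7):=0, (m+7,m+8):=sg, (m+7,m+9):=sg, (m+8,m+9):= -sg)) (i, j)"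
    proof (cases "(i, j) \<in> Edges")
      case False
      then show ?thesis using z[OF False] by (auto simp: Edges_iff)
    next
      case True
      then have ij: "j = Suc i \<or> j = i + 2" by (simp add: Edges_iff)
      show ?thesis
      proof (cases "i \<le> m + 3")
        case True then show ?thesis using ij by (auto simp: edge_le_def Edges_iff)
      next
        case False
        then have "i = m+4 \<or> i = m+5 \<or> i = m+6 \<or> i = m + 7 \<or> i = m+8 \<or> i > m + 8" by linarith
        moreover have "i > m + 8 \<Longrightarrow> w (i - 2, j - 2) = 0" using ij zj[of "j-2" "i-2"] by auto
        moreover have "i > m + 8 \<Longrightarrow> w (i, j) = 0" using ij zj[of j] by auto
        ultimately show ?thesis using ij v zj[of "m+8"] zj[of "m+9"] zj[of "m+10"]
          by (elim disjE) (simp_all add: edge_le_def Edges_iff ac_simps)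
      qed
    qed
  qed
qed


lemma step2_w: assumes W: "InvW w m sg D"
  shows "(\<lambda>(i, j).
      if (i, j) \<notin> Edges then 0
      else if edge_le (i, j) (m + 7 - 4, m + 7 - 2) then w (i, j)
      else if (i, j) = (m + 7 - 2, m + 7 - 1) then 2 * w (i, j)
      else if (i, j) = (m + 7 - 1, m + 7 + 1) then - 2 * w (m + 7 - 2, m + 7 - 1)
      else if edge_le (m + 7 + 1, m + 7 + 2) (i, j) then w (i - 3, j - 3)
      else 0) = w((m+5,m+6):= -2*sg, (m+5,m+7):= 0, (m+6,m+7):=0, (m+6,m+8):=2*sg,
                  (m+8,m+9):= -sg, (m+8,m+10):= -sg, (m+9,m+10):= sg)"
proof -
  have z: "\<And>e. e \<notin> Edges \<Longrightarrow> w e = 0" and zj: "\<And>i j. m + 7 < j \<Longrightarrow> w (i, j) = 0"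
    and v: "w (m+4, m+5) = 0" "w (m+4, m+6) = 0" "w (m+5, m+6) = - sg" "w (m+5, m+7) = - sg" "w (m+6, m+7) = sg"
    using W unfolding InvW_def by auto
  show ?thesis
  proof (rule ext, clarify)
    fix i j
    show "(if (i, j) \<notin> Edges then 0
      else if edge_le (i, j) (m + 7 - 4, m + 7 - 2) then w (i, j)
      else if (i, j) = (m + 7 - 2, m + 7 - 1) then 2 * w (i, j)
      else if (i, j) = (m + 7 - 1, m + 7 + 1) then - 2 * w (m + 7 - 2, m + 7 - 1)
      else if edge_le (m + 7 + 1, m + 7 + 2) (i, j) then w (i - 3, j - 3)
      else 0) = (w((m+5,m+6):= -2*sg, (m+5,m+7):= 0, (m+6,m+7):=0, (m+6,m+8):=2*sg,
                  (m+8,m+9):= -sg, (m+8,m+10):= -sg, (m+9,m+10):= sg)) (i, j)"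
    proof (cases "(i, j) \<in> Edges")
      case False
      then show ?thesis using z[OF False] by (auto simp: Edges_iff)
    next
      case True
      then have ij: "j = Suc i \<or> j = i + 2" by (simp add: Edges_iff)
      show ?thesis
      proof (cases "i \<le> m + 3")
        case True then show ?thesis using ij by (auto simp: edge_le_def Edges_iff)
      next
        case False
        then have "i = m+4 \<or> i = m+5 \<or> i = m+6 \<or> i = m + 7 \<or> i = m+8 \<or> i = m+9 \<or> i > m + 9" by linarith
        moreover have "i > m + 9 \<Longrightarrow> w (i - 3, j - 3) = 0" using ij zj[of "j-3" "i-3"] by auto
        moreover have "i > m + 9 \<Longrightarrow> w (i, j) = 0" using ij zj[of j] by auto
        ultimately show ?thesis using ij v zj[of "m+8"] zj[of "m+9"] zj[of "m+10"] zj[of "m+11"]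
          by (elim disjE) (simp_all add: edge_le_def Edges_iff ac_simps)
      qed
    qed
  qed
qed

lemma step1_Inv: assumes "Inv g m sg D" shows "Inv (step1 g) (m+2) (-sg) (D+1)"
proof -
  let ?w = "weight_of g"
  have W: "InvW ?w m sg D" using assms Inv_def by auto
  have fin: "fsupp ?w" unfolding fsupp_def by (rule InvW_fin[OF W])
  have fin': "fsupp (negw ?w)" using fin by simp
  have k: "max_adj g = m + 7" by (rule Inv_max_adj[OF assms])
  have z: "\<And>e. e \<notin> Edges \<Longrightarrow> ?w e = 0" and zj: "\<And>i j. m + 7 < j \<Longrightarrow> ?w (i, j) = 0"
    and v: "?w (m+4, m+5) = 0" "?w (m+4, m+6) = 0" "?w (m+5, m+6) = - sg" "?w (m+5, m+7) = - sg" "?w (m+6, m+7) = sg"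
    and s: "sg = 1 \<or> sg = -1" and P: "PP ?w = D" "PP (\<lambda>e. - ?w e) = D"
    using W unfolding InvW_def by auto
  define w' where "w' = ?w((m+5,m+6):=0, (m+5,m+7):= -2*sg, (m+6,m+7):=0, (m+7,m+8):=sg, (m+7,m+9):=sg, (m+8,m+9):= -sg)"
  have st: "step1 g = binom_of w'"
    unfolding step1_def Let_def k w'_def using step1_w[OF W] by simp
  have "int (PP w') = int D + 1" unfolding w'_def using fin v zj[of "m+8"] zj[of "m+9"] P s
    by (auto simp add: ac_simps)
  moreover have "int (PP (negw w')) = int D + 1" unfolding w'_def using fin' v zj[of "m+8"] zj[of "m+9"] P s
    by (auto simp add: ac_simps negw_def[symmetric])
  moreover have "\<forall>e. e \<notin> Edges \<longrightarrow> w' e = 0" unfolding w'_def using z by (auto simp: Edges_iff)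
  moreover have "\<forall>i j. m + 2 + 7 < j \<longrightarrow> w' (i, j) = 0" unfolding w'_def using zj by auto
  ultimately have "InvW w' (m+2) (-sg) (D+1)" unfolding InvW_def using s v zj[of "m+8"]
    by (auto simp: w'_def ac_simps negw_def)
  then show ?thesis unfolding Inv_def st by simp
qed


lemma step2_Inv: assumes "Inv g m sg D" shows "Inv (step2 g) (m+3) sg (D+2)"
proof -
  let ?w = "weight_of g"
  have W: "InvW ?w m sg D" using assms Inv_def by auto
  have fin: "fsupp ?w" unfolding fsupp_def by (rule InvW_fin[OF W])
  have fin': "fsupp (negw ?w)" using fin by simp
  have k: "max_adj g = m + 7" by (rule Inv_max_adj[OF assms])
  have z: "\<And>e. e \<notin> Edges \<Longrightarrow> ?w e = 0" and zj: "\<And>i j. m + 7 < j \<Longrightarrow> ?w (i, j) = 0"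
    and v: "?w (m+4, m+5) = 0" "?w (m+4, m+6) = 0" "?w (m+5, m+6) = - sg" "?w (m+5, m+7) = - sg" "?w (m+6, m+7) = sg"
    and s: "sg = 1 \<or> sg = -1" and P: "PP ?w = D" "PP (\<lambda>e. - ?w e) = D"
    using W unfolding InvW_def by auto
  define w' where "w' = ?w((m+5,m+6):= -2*sg, (m+5,m+7):= 0, (m+6,m+7):=0, (m+6,m+8):=2*sg,
                  (m+8,m+9):= -sg, (m+8,m+10):= -sg, (m+9,m+10):= sg)"
  have st: "step2 g = binom_of w'"
    unfolding step2_def Let_def k w'_def using step2_w[OF W] by simp
  have "int (PP w') = int D + 2" unfolding w'_def using fin v zj[of "m+8"] zj[of "m+9"] zj[of "m+10"] P s
    by (auto simp add: ac_simps)
  moreover have "int (PP (negw w')) = int D + 2" unfolding w'_def using fin' v zj[of "m+8"] zj[of "m+9"] zj[of "m+10"] P s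
    by (auto simp add: ac_simps negw_def[symmetric])
  moreover have "\<forall>e. e \<notin> Edges \<longrightarrow> w' e = 0" unfolding w'_def using z by (auto simp: Edges_iff)
  moreover have "\<forall>i j. m + 3 + 7 < j \<longrightarrow> w' (i, j) = 0" unfolding w'_def using zj by auto
  ultimately have "InvW w' (m+3) sg (D+2)" unfolding InvW_def using s v zj[of "m+8"] zj[of "m+9"]
    by (auto simp: w'_def ac_simps negw_def)
  then show ?thesis unfolding Inv_def st by simp
qed

lemma Inv_empty: "Inv g_empty 0 1 4"
proof -
  define w where "w = (\<lambda>_::edge. 0::int)((1,2):=1, (3,5):=2, (6,7):=1, (1,3):= -1, (2,3):= -1, (5,6):= -1, (5,7):= -1)"
  have ww: "weight_of g_empty = w"
    unfolding w_def weight_of_def g_empty_def by (rule ext) auto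
  have be: "g_empty = binom_of w"
    unfolding w_def binom_of_def g_empty_def by (auto intro!: ext)
  have f0: "fsupp (\<lambda>_::edge. 0::int)" unfolding fsupp_def by simp
  have p0: "PP (\<lambda>_::edge. 0::int) = 0" unfolding PP_def mono_deg_def by simp
  have n0: "negw (\<lambda>_::edge. 0::int) = (\<lambda>_. 0)" unfolding negw_def by simp
  have "int (PP w) = 4" unfolding w_def using f0 p0 by simp
  moreover have "int (PP (negw w)) = 4" unfolding w_def using f0 p0 n0 by simp
  moreover have "\<forall>e. e \<notin> Edges \<longrightarrow> w e = 0" unfolding w_def by (auto simp: Edges_iff)
  moreover have "\<forall>i j. 0 + 7 < j \<longrightarrow> w (i, j) = 0" unfolding w_def by auto
  ultimately have "InvW w 0 1 4" unfolding InvW_def by (auto simp: w_def negw_def)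
  then show ?thesis unfolding Inv_def ww using be by simp
qed


lemma step1_eq: assumes "Inv g m sg D"
  shows "step1 g = binom_of ((weight_of g)((m+5,m+6):=0, (m+5,m+7):= -2*sg, (m+6,m+7):=0, (m+7,m+8):=sg, (m+7,m+9):=sg, (m+8,m+9):= -sg))"
proof -
  have W: "InvW (weight_of g) m sg D" using assms Inv_def by auto
  show ?thesis unfolding step1_def Let_def Inv_max_adj[OF assms] using step1_w[OF W] by simp
qed

lemma step2_eq: assumes "Inv g m sg D"
  shows "step2 g = binom_of ((weight_of g)((m+5,m+6):= -2*sg, (m+5,m+7):= 0, (m+6,m+7):=0, (m+6,m+8):=2*sg,
                  (m+8,m+9):= -sg, (m+8,m+10):= -sg, (m+9,m+10):= sg))"
proof -
  have W: "InvW (weight_of g) m sg D" using assms Inv_def by auto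
  show ?thesis unfolding step2_def Let_def Inv_max_adj[OF assms] using step2_w[OF W] by simp
qed

lemma Inv_facts: assumes "Inv g m sg D"
  shows "g = binom_of (weight_of g)" "\<And>i j. m + 7 < j \<Longrightarrow> weight_of g (i, j) = 0"
    "weight_of g (m+4, m+5) = 0" "weight_of g (m+4, m+6) = 0" "weight_of g (m+5, m+6) = - sg"
    "weight_of g (m+5, m+7) = - sg" "weight_of g (m+6, m+7) = sg" "sg = 1 \<or> sg = -1"
  using assms unfolding Inv_def InvW_def by auto

lemma step_Inv: assumes "Inv g m sg D" "a \<in> {1,2}"
  shows "Inv (step a g) (m + a + 1) (if a = 1 then - sg else sg) (D + a)"
proof -
  have "a = 1 \<or> a = 2" using assms(2) by auto
  then show ?thesis
  proof
    assume "a = 1" then show ?thesis using step1_Inv[OF assms(1)] unfolding step_def by simp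
  next
    assume a: "a = 2"
    have "Inv (step2 g) (m+3) sg (D+2)" using step2_Inv[OF assms(1)] .
    moreover have "m + a + 1 = m + 3" "D + a = D + 2" using a by simp_all
    ultimately show ?thesis unfolding step_def using a by (simp add: eval_nat_numeral)
  qed
qed

lemma decode: assumes g: "Inv g m sg D" and h: "Inv h n tg E" and ab: "a \<in> {1,2}" "b \<in> {1,2}"
  and eq: "step a g = step b h"
  shows "a = b \<and> g = h"
proof -
  have "max_adj (step a g) = m + a + 1 + 7" by (rule Inv_max_adj[OF step_Inv[OF g ab(1)]])
  moreover have "max_adj (step b h) = n + b + 1 + 7" by (rule Inv_max_adj[OF step_Inv[OF h ab(2)]])
  ultimately have mn: "m + a = n + b" using eq by simp
  note G = Inv_facts[OF g] and H = Inv_facts[OF h]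
  have weq: "weight_of (step a g) = weight_of (step b h)" using eq by simp
  consider "a = 1" "b = 1" | "a = 1" "b = 2" | "a = 2" "b = 1" | "a = 2" "b = 2" using ab by auto
  then show ?thesis
  proof cases
    case 1
    then have mn': "m = n" using mn by simp
    have e: "(weight_of g)((m+5,m+6):=0, (m+5,m+7):= -2*sg, (m+6,m+7):=0, (m+7,m+8):=sg, (m+7,m+9):=sg, (m+8,m+9):= -sg)
      = (weight_of h)((m+5,m+6):=0, (m+5,m+7):= -2*tg, (m+6,m+7):=0, (m+7,m+8):=tg, (m+7,m+9):=tg, (m+8,m+9):= -tg)"
      using weq 1 unfolding step_def step1_eq[OF g] step1_eq[OF h] mn' by simp
    have st: "sg = tg" using fun_cong[OF e, of "(m+7,m+8)"] by simp
    have "weight_of g e = weight_of h e" for e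
    proof (cases "e \<in> {(m+5,m+6),(m+5,m+7),(m+6,m+7),(m+7,m+8),(m+7,m+9),(m+8,m+9)}")
      case True then show ?thesis using G H mn' st by auto
    next
      case False then show ?thesis using fun_cong[OF e, of e] by auto
    qed
    then have "weight_of g = weight_of h" by auto
    then show ?thesis using G(1) H(1) 1 by metis
  next
    case 2
    then have mn': "m = n + 1" using mn by simp
    have e: "(weight_of g)((m+5,m+6):=0, (m+5,m+7):= -2*sg, (m+6,m+7):=0, (m+7,m+8):=sg, (m+7,m+9):=sg, (m+8,m+9):= -sg)
      = (weight_of h)((n+5,n+6):= -2*tg, (n+5,n+7):= 0, (n+6,n+7):=0, (n+6,n+8):=2*tg,
                  (n+8,n+9):= -tg, (n+8,n+10):= -tg, (n+9,n+10):= tg)"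
      using weq 2 unfolding step_def step1_eq[OF g] step2_eq[OF h] by simp
    have p: "(m+4, m+5) = (n+5, n+6)" using mn' by simp
    have z: "weight_of g (n+5,n+6) = 0" using G(3) unfolding p .
    have False using fun_cong[OF e, of "(n+5,n+6)"] z H(8) mn' by auto
    then show ?thesis ..
  next
    case 3
    then have mn': "n = m + 1" using mn by simp
    have e: "(weight_of h)((n+5,n+6):=0, (n+5,n+7):= -2*tg, (n+6,n+7):=0, (n+7,n+8):=tg, (n+7,n+9):=tg, (n+8,n+9):= -tg)
      = (weight_of g)((m+5,m+6):= -2*sg, (m+5,m+7):= 0, (m+6,m+7):=0, (m+6,m+8):=2*sg,
                  (m+8,m+9):= -sg, (m+8,m+10):= -sg, (m+9,m+10):= sg)"
      using weq 3 unfolding step_def step1_eq[OF h] step2_eq[OF g] by simp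
    have p: "(n+4, n+5) = (m+5, m+6)" using mn' by simp
    have z: "weight_of h (m+5,m+6) = 0" using H(3) unfolding p .
    have False using fun_cong[OF e, of "(m+5,m+6)"] z G(8) mn' by auto
    then show ?thesis ..
  next
    case 4
    then have mn': "m = n" using mn by simp
    have e: "(weight_of g)((m+5,m+6):= -2*sg, (m+5,m+7):= 0, (m+6,m+7):=0, (m+6,m+8):=2*sg,
                  (m+8,m+9):= -sg, (m+8,m+10):= -sg, (m+9,m+10):= sg)
      = (weight_of h)((m+5,m+6):= -2*tg, (m+5,m+7):= 0, (m+6,m+7):=0, (m+6,m+8):=2*tg,
                  (m+8,m+9):= -tg, (m+8,m+10):= -tg, (m+9,m+10):= tg)"
      using weq 4 unfolding step_def step2_eq[OF g] step2_eq[OF h] mn' by simp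
    have st: "sg = tg" using fun_cong[OF e, of "(m+9,m+10)"] by simp
    have "weight_of g e = weight_of h e" for e
    proof (cases "e \<in> {(m+5,m+6),(m+5,m+7),(m+6,m+7),(m+6,m+8),(m+8,m+9),(m+8,m+10),(m+9,m+10)}")
      case True then show ?thesis using G H mn' st by auto
    next
      case False then show ?thesis using fun_cong[OF e, of e] by auto
    qed
    then have "weight_of g = weight_of h" by auto
    then show ?thesis using G(1) H(1) 4 by metis
  qed
qed


lemma g_seq_snoc: "g_seq (s @ [a]) = step a (g_seq s)"
  unfolding g_seq_def by simp

lemma g_seq_nil: "g_seq [] = g_empty" unfolding g_seq_def by simp

lemma Inv_seq: "set s \<subseteq> {1,2} \<Longrightarrow> \<exists>m sg. Inv (g_seq s) m sg (4 + sum_list s)"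
proof (induction s rule: rev_induct)
  case Nil then show ?case using Inv_empty g_seq_nil by auto
next
  case (snoc a s)
  then obtain m sg where I: "Inv (g_seq s) m sg (4 + sum_list s)" by auto
  have a: "a \<in> {1,2}" using snoc.prems by auto
  show ?case using step_Inv[OF I a] unfolding g_seq_snoc by (auto simp: ac_simps)
qed

lemma Inv_deg: assumes "Inv g m sg D" shows "binom_deg g = D"
proof -
  have W: "InvW (weight_of g) m sg D" and g: "g = binom_of (weight_of g)" using assms Inv_def by auto
  have "PP (weight_of g) = D" "PP (\<lambda>e. - weight_of g e) = D" using W InvW_def by auto
  then show ?thesis
    by (subst g) (simp add: binom_deg_def binom_of_def PP_def)
qed

lemma deg_seq: "set s \<subseteq> {1,2} \<Longrightarrow> binom_deg (g_seq s) = 4 + sum_list s"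
  using Inv_seq Inv_deg by blast

lemma sum_pos: "set s \<subseteq> {1,2} \<Longrightarrow> s \<noteq> [] \<Longrightarrow> sum_list s > (0::nat)"
  by (cases s) auto

lemma inj_seq: "set s \<subseteq> {1,2} \<Longrightarrow> set t \<subseteq> {1,2} \<Longrightarrow> g_seq s = g_seq t \<Longrightarrow> s = t"
proof (induction s arbitrary: t rule: rev_induct)
  case Nil
  then have "sum_list t = 0" using deg_seq[of "[]"] deg_seq[of t] by simp
  then show ?case using sum_pos[OF Nil(2)] by (metis less_irrefl)
next
  case (snoc a s)
  show ?case
  proof (cases t rule: rev_cases)
    case Nil
    then have "sum_list (s @ [a]) = 0" using deg_seq[of "[]"] deg_seq[of "s @ [a]"] snoc.prems by simp
    then show ?thesis using sum_pos[of "s @ [a]"] snoc.prems by simp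
  next
    case (snoc t' b)
    obtain m sg where I1: "Inv (g_seq s) m sg (4 + sum_list s)" using Inv_seq snoc.prems(1) by fastforce
    obtain n tg where I2: "Inv (g_seq t') n tg (4 + sum_list t')" using Inv_seq snoc.prems(2) \<open>t = t' @ [b]\<close> by fastforce
    have "a = b \<and> g_seq s = g_seq t'"
      by (rule decode[OF I1 I2]) (use snoc.prems \<open>t = t' @ [b]\<close> in \<open>auto simp: g_seq_snoc\<close>)
    then show ?thesis using snoc.IH[of t'] snoc.prems \<open>t = t' @ [b]\<close> by auto
  qed
qed

definition comps :: "nat \<Rightarrow> nat list set" where
  "comps n = {s. set s \<subseteq> {1,2} \<and> sum_list s = n}"

lemma comps0: "comps 0 = {[]}"
proof -
  have "s = []" if "set s \<subseteq> {1,2}" "sum_list s = (0::nat)" for s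
    using sum_pos[OF that(1)] that(2) by auto
  then show ?thesis unfolding comps_def by auto
qed

lemma comps1: "comps (Suc 0) = {[1]}"
proof -
  have "s = [1]" if "set s \<subseteq> {1,2}" "sum_list s = Suc 0" for s
  proof (cases s)
    case Nil then show ?thesis using that by simp
  next
    case (Cons x r)
    then have "x = 1" "sum_list r = 0" using that by auto
    then show ?thesis using Cons comps0 that unfolding comps_def by auto
  qed
  then show ?thesis unfolding comps_def by auto
qed

lemma compsSS: "comps (Suc (Suc n)) = Cons 1 ` comps (Suc n) \<union> Cons 2 ` comps n"
proof
  show "comps (Suc (Suc n)) \<subseteq> Cons 1 ` comps (Suc n) \<union> Cons 2 ` comps n"
  proof
    fix s assume s: "s \<in> comps (Suc (Suc n))"
    then obtain x r where sr: "s = x # r" unfolding comps_def by (cases s) auto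
    then have "x = 1 \<or> x = 2" using s unfolding comps_def by auto
    then show "s \<in> Cons 1 ` comps (Suc n) \<union> Cons 2 ` comps n"
      using s sr unfolding comps_def by auto
  qed
qed (auto simp: comps_def)

lemma comps_card: "finite (comps n) \<and> card (comps n) = fib (Suc n)"
proof (induction n rule: fib.induct)
  case 1 then show ?case by (simp add: comps0)
next
  case 2 then show ?case by (simp add: comps1)
next
  case (3 n)
  have d: "Cons 1 ` comps (Suc n) \<inter> Cons 2 ` comps n = {}" by auto
  have "card (comps (Suc (Suc n))) = card (comps (Suc n)) + card (comps n)"
    unfolding compsSS using 3 d by (simp add: card_Un_disjoint card_image)
  then show ?case using 3 unfolding compsSS by simp
qed

theorem corollary6p6:
  fixes d :: nat
  assumes "d \<ge> 3"
  shows "finite {g \<in> G'. binom_deg g = d} \<and> card {g \<in> G'. binom_deg g = d} = fib (d - 3)"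
proof -
  let ?A = "{s. set s \<subseteq> {1,2} \<and> 4 + sum_list s = d}"
  have eq: "{g \<in> G'. binom_deg g = d} = g_seq ` ?A"
    unfolding G'_def using deg_seq by auto
  have inj: "inj_on g_seq ?A" by (rule inj_onI) (use inj_seq in auto)
  have fc: "finite ?A \<and> card ?A = fib (d - 3)"
  proof (cases "d \<ge> 4")
    case True
    then have "?A = comps (d - 4)" unfolding comps_def by auto
    moreover have "Suc (d - 4) = d - 3" using True by simp
    ultimately show ?thesis using comps_card[of "d - 4"] by simp
  next
    case False
    then have "?A = {}" using assms by auto
    moreover have "d - 3 = 0" using False assms by simp
    ultimately show ?thesis by simp
  qed
  show ?thesis unfolding eq using fc inj by (simp add: card_image)
qed

end
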